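(* Let $n\ge1$ and let $d>n+1$ be a prime. Let $A_1=\dots=A_n=C_1=\dots=C_n=\mathbb{C}^d$ with computational basis $\{|0\rangle,\dots,|d-1\rangle\}$, and let $M_n=I_n+E_n$ be the $n\times n$ matrix with $2$ on the diagonal and $1$ everywhere else ($I_n$ the identity, $E_n$ the all-ones matrix). Then $U_{d,n}|\vec x\rangle=|M_n\vec x\rangle$, where $|\vec x\rangle=|x_1\rangle\cdots|x_n\rangle$ for $\vec x\in\{0,\dots,d-1\}^n$ and all arithmetic is modulo $d$, defines a maximally $I_3$-scrambling unitary $U_{d,n}:A_1\otimes\cdots\otimes A_n\to C_1\otimes\cdots\otimes C_n$, i.e. \[ I_3(A_i;A_i^c;C_j)=-2\log\min\{|A_i|,|A_i^c|,|C_j|,|C_j^c|\}\quad\text{for all }i,j. \]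
   Context: The Choi state of $U$ is $\rho=U_{A_1'\dots A_n'\to C_1\dots C_n}\bigl(\bigotimes_i\Phi^+_{A_iA_i'}\bigr)U^\dagger$, with $\Phi^+_{XX'}=|X|^{-1/2}\sum_k|kk\rangle$; informations are evaluated on it. $A_i^c$ (resp. $C_j^c$) denotes the composite of all input (resp. output) systems other than $A_i$ (resp. $C_j$), and $|X|$ denotes dimension. Entropies are von Neumann (base-2), $I(X;Y)=S(X)+S(Y)-S(XY)$, $I_3(X;Y;Z)=I(X;Y)+I(X;Z)-I(X;YZ)$. *)

theory Defs
  imports "Jordan_Normal_Form.Schur_Decomposition" "Jordan_Normal_Form.Char_Poly"
          "HOL-Computational_Algebra.Polynomial"
begin

text \<open>Systems are numbered 0..<2n: system k < n is A_(k+1), system n+k is C_(k+1).  A basis state of a set S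
  of systems is a function g :: nat => nat with g k < d on S and g k = 0 off S.\<close>

definition configs :: "nat \<Rightarrow> nat set \<Rightarrow> (nat \<Rightarrow> nat) set" where
  "configs d S = {g. (\<forall>k\<in>S. g k < d) \<and> (\<forall>k. k \<notin> S \<longrightarrow> g k = 0)}"

text \<open>Encoding of basis states of a system set S as indices in {0..<d^card S}
  (mixed radix, in increasing order of system labels), and decoding.\<close>

definition sys_enc :: "nat \<Rightarrow> nat set \<Rightarrow> (nat \<Rightarrow> nat) \<Rightarrow> nat" where
  "sys_enc d S g = (\<Sum>k\<in>S. g k * d ^ card {l\<in>S. l < k})"

definition sys_dec :: "nat \<Rightarrow> nat set \<Rightarrow> nat \<Rightarrow> (nat \<Rightarrow> nat)" where
  "sys_dec d S r = (\<lambda>k. if k \<in> S then r div d ^ card {l\<in>S. l < k} mod d else 0)"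

definition unitary_mat :: "complex mat \<Rightarrow> bool" where
  "unitary_mat U \<longleftrightarrow> (\<exists>N. U \<in> carrier_mat N N \<and>
      U * mat_adjoint U = 1\<^sub>m N \<and> mat_adjoint U * U = 1\<^sub>m N)"

text \<open>The unitary U_{d,n}: |x> |-> |M_n x mod d|, with M_n = I_n + E_n, i.e.
  (M_n x)_k = x_k + sum_l x_l.  Input systems A_1..A_n are labels 0..<n,
  output systems likewise indexed 0..<n (as an operator on (C^d)^{\<otimes>n}).\<close>

definition Mvec :: "nat \<Rightarrow> nat \<Rightarrow> (nat \<Rightarrow> nat) \<Rightarrow> (nat \<Rightarrow> nat)" where
  "Mvec d n x = (\<lambda>k. if k < n then (x k + (\<Sum>l<n. x l)) mod d else 0)"

definition U_dn :: "nat \<Rightarrow> nat \<Rightarrow> complex mat" where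
  "U_dn d n = mat (d ^ n) (d ^ n)
     (\<lambda>(r, c). if sys_dec d {..<n} r = Mvec d n (sys_dec d {..<n} c) then 1 else 0)"

text \<open>Choi state of a unitary U on n input systems A_1..A_n (labels 0..<n) to n output
  systems C_1..C_n (labels n..<2n): the pure state
  (U_{A'->C} \<otimes> id_A)(\<otimes>_i \<Phi>^+_{A_i A_i'}) =
   d^{-n/2} \<Sum>_{x,y} <y|U|x> |x>_A |y>_C ; we give its coefficient on the basis state g.\<close>

definition choi_vec :: "nat \<Rightarrow> nat \<Rightarrow> complex mat \<Rightarrow> (nat \<Rightarrow> nat) \<Rightarrow> complex" where
  "choi_vec d n U g =
     U $$ (sys_enc d {..<n} (\<lambda>k. g (n + k)), sys_enc d {..<n} g) / complex_of_real (sqrt (real d ^ n))"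

text \<open>Reduced density matrix on the systems S \<subseteq> {..<N} of the pure state |psi><psi|
  (partial trace over {..<N} - S), as a d^|S| x d^|S| matrix.\<close>

definition reduced_state ::
  "nat \<Rightarrow> nat \<Rightarrow> ((nat \<Rightarrow> nat) \<Rightarrow> complex) \<Rightarrow> nat set \<Rightarrow> complex mat" where
  "reduced_state d N psi S = mat (d ^ card S) (d ^ card S)
     (\<lambda>(r, c). \<Sum>h\<in>configs d ({..<N} - S).
        psi (\<lambda>k. sys_dec d S r k + h k) * cnj (psi (\<lambda>k. sys_dec d S c k + h k)))"

text \<open>Von Neumann entropy (base 2) of a density matrix: - \<Sum> \<lambda> log2 \<lambda> over its eigenvalues
  counted with algebraic multiplicity (roots of the characteristic polynomial);
  eigenvalues of a density matrix are real and nonnegative, 0 log 0 = 0.\<close>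

definition vn_entropy :: "complex mat \<Rightarrow> real" where
  "vn_entropy \<rho> = - sum_mset (image_mset (\<lambda>\<mu>. if Re \<mu> = 0 then 0 else Re \<mu> * log 2 (Re \<mu>))
      (proots (char_poly \<rho>)))"

definition ent :: "nat \<Rightarrow> nat \<Rightarrow> ((nat \<Rightarrow> nat) \<Rightarrow> complex) \<Rightarrow> nat set \<Rightarrow> real" where
  "ent d N psi X = vn_entropy (reduced_state d N psi X)"

definition mutual_info ::
  "nat \<Rightarrow> nat \<Rightarrow> ((nat \<Rightarrow> nat) \<Rightarrow> complex) \<Rightarrow> nat set \<Rightarrow> nat set \<Rightarrow> real" where
  "mutual_info d N psi X Y = ent d N psi X + ent d N psi Y - ent d N psi (X \<union> Y)"

definition tripartite_info ::
  "nat \<Rightarrow> nat \<Rightarrow> ((nat \<Rightarrow> nat) \<Rightarrow> complex) \<Rightarrow> nat set \<Rightarrow> nat set \<Rightarrow> nat set \<Rightarrow> real" where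
  "tripartite_info d N psi X Y Z =
     mutual_info d N psi X Y + mutual_info d N psi X Z - mutual_info d N psi X (Y \<union> Z)"

end

theory Submission
  imports Defs
begin

definition tr :: "complex mat \<Rightarrow> complex" where "tr A = (\<Sum>i<dim_row A. A $$ (i,i))"

lemma tr_mult_comm:
  assumes "X \<in> carrier_mat m k" "Y \<in> carrier_mat k m"
  shows "tr (X * Y) = tr (Y * X)"
proof -
  have "tr (X*Y) = (\<Sum>i<m. \<Sum>j<k. X$$(i,j) * Y$$(j,i))"
    using assms by (simp add: tr_def scalar_prod_def atLeast0LessThan)
  also have "\<dots> = (\<Sum>j<k. \<Sum>i<m. Y$$(j,i) * X$$(i,j))"
    by (subst sum.swap) (simp add: mult.commute)
  also have "\<dots> = tr (Y*X)"
    using assms by (simp add: tr_def scalar_prod_def atLeast0LessThan)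
  finally show ?thesis .
qed

lemma proots_lin: "proots (\<Prod>a\<leftarrow>es. [:- a, 1:]) = mset (es::complex list)"
proof (induct es)
  case (Cons a es)
  have nz: "(\<Prod>a\<leftarrow>es. [:- a, 1:]) \<noteq> 0" by (auto simp: prod_list_zero_iff)
  have "proots (\<Prod>a\<leftarrow>a#es. [:- a, 1:]) = proots [:- a, 1:] + proots (\<Prod>a\<leftarrow>es. [:- a, 1:])"
    unfolding list.map prod_list.Cons by (rule proots_mult) (use nz in auto)
  also have "proots [:- a, 1:] = {#a#}" using proots_linear_factor[of "-a"] by simp
  finally show ?case using Cons by simp
qed simp

lemma proj_entropy:
  fixes A :: "complex mat"
  assumes A: "A \<in> carrier_mat m m" and sq: "A * A = complex_of_real l \<cdot>\<^sub>m A"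
    and l: "l > 0" and trA: "(\<Sum>i<m. A$$(i,i)) = 1"
  shows "vn_entropy A = - log 2 l"
proof -
  obtain es where cp: "char_poly A = (\<Prod>a\<leftarrow>es. [:- a, 1:])" and les: "length es = m"
    using char_poly_factorized[OF A] by blast
  obtain B P Q where sd: "schur_decomposition A es = (B,P,Q)" by (cases "schur_decomposition A es") auto
  from schur_decomposition[OF A cp sd] have sim: "similar_mat_wit A B P Q"
    and ut: "upper_triangular B" and dg: "diag_mat B = es" by auto
  note D = similar_mat_witD2[OF A sim]
  have BQAP: "B = Q * A * P" using similar_mat_witD2[OF D(5) similar_mat_wit_sym[OF sim]] by simp
  have BB: "B * B = complex_of_real l \<cdot>\<^sub>m B"
  proof -
    have "B * B = Q * A * P * (Q * A * P)" using BQAP by simp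
    also have "\<dots> = Q * A * (P * Q) * A * P"
      using D by (simp add: assoc_mult_mat[of _ m m _ m _ m])
    also have "\<dots> = Q * (A * A) * P"
      using D A by (simp add: assoc_mult_mat[of _ m m _ m _ m])
    also have "\<dots> = Q * (complex_of_real l \<cdot>\<^sub>m A) * P" using sq by simp
    also have "\<dots> = complex_of_real l \<cdot>\<^sub>m (Q * A * P)"
      using D(7) D(6) A by (simp add: mult_smult_distrib[of _ m m] mult_smult_assoc_mat[of _ m m])
    finally show ?thesis using BQAP by simp
  qed
  have diagB: "B $$ (i,i) = 0 \<or> B $$ (i,i) = complex_of_real l" if i: "i < m" for i
  proof -
    have "(B*B) $$ (i,i) = (\<Sum>k<m. B$$(i,k) * B$$(k,i))"
      using D i by (simp add: scalar_prod_def atLeast0LessThan)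
    also have "\<dots> = B$$(i,i) * B$$(i,i)"
    proof -
      have "(\<Sum>k<m. B$$(i,k) * B$$(k,i)) = B$$(i,i) * B$$(i,i) + (\<Sum>k\<in>{..<m}-{i}. B$$(i,k) * B$$(k,i))"
        using i by (subst sum.remove[of _ i]) auto
      moreover have "(\<Sum>k\<in>{..<m}-{i}. B$$(i,k) * B$$(k,i)) = 0"
      proof (rule sum.neutral, rule ballI)
        fix k assume k: "k \<in> {..<m}-{i}"
        show "B$$(i,k) * B$$(k,i) = 0"
        proof (cases "k < i")
          case True thus ?thesis using i ut D by (auto simp: upper_triangular_def)
        next
          case False hence "i < k" using k by auto
          thus ?thesis using k ut D by (auto simp: upper_triangular_def)
        qed
      qed
      ultimately show ?thesis by simp
    qed
    finally show ?thesis using BB D i by (simp, metis)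
  qed
  have ees: "e = 0 \<or> e = complex_of_real l" if e: "e \<in> set es" for e
  proof -
    from e dg D obtain i where i: "i < m" and ei: "e = B$$(i,i)" by (auto simp: diag_mat_def)
    from diagB[OF i] show ?thesis unfolding ei .
  qed
  have trB: "sum_list es = 1"
  proof -
    have "tr A = tr (P * (B * Q))" using D by (simp add: assoc_mult_mat[of _ m m _ m _ m])
    also have "\<dots> = tr ((B * Q) * P)" using D by (intro tr_mult_comm[of _ m m]) auto
    also have "\<dots> = tr B" using D by (simp add: assoc_mult_mat[of _ m m _ m _ m])
    finally have "tr B = 1" using trA A by (simp add: tr_def)
    moreover have "tr B = sum_list es" using dg D
      by (auto simp: tr_def diag_mat_def atLeast0LessThan[symmetric] sum_list_sum_nth)
    ultimately show ?thesis by simp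
  qed
  have pr: "proots (char_poly A) = mset es"
    unfolding cp by (rule proots_lin)
  have "vn_entropy A = - sum_list (map (\<lambda>\<mu>. if Re \<mu> = 0 then 0 else Re \<mu> * log 2 (Re \<mu>)) es)"
    unfolding vn_entropy_def pr by (simp add: sum_mset_sum_list flip: mset_map)
  also have "map (\<lambda>\<mu>. if Re \<mu> = 0 then 0 else Re \<mu> * log 2 (Re \<mu>)) es = map (\<lambda>\<mu>. Re \<mu> * log 2 l) es"
    using ees l by (auto intro!: map_cong) (metis Re_complex_of_real zero_complex.sel(1))
  also have "sum_list \<dots> = Re (sum_list es) * log 2 l"
    by (induct es) (auto simp: algebra_simps)
  finally show ?thesis using trB by simp
qed


lemma digits_sum: "(\<Sum>p<m. (r div d^p mod d) * d^p) = r mod (d::nat)^m"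
proof (induct m)
  case (Suc m)
  have "r mod d^(Suc m) = r mod (d^m * d)" by (simp add: mult.commute)
  also have "\<dots> = d^m * (r div d^m mod d) + r mod d^m" by (rule mod_mult2_eq)
  finally show ?case using Suc by (simp add: mult.commute)
qed simp

lemma pos_bij:
  assumes "finite (S::nat set)"
  shows "bij_betw (\<lambda>k. card {l\<in>S. l < k}) S {..<card S}"
proof -
  have inj: "inj_on (\<lambda>k. card {l\<in>S. l < k}) S"
  proof (rule inj_onI, rule ccontr)
    fix k k' assume k: "k \<in> S" "k' \<in> S" and eq: "card {l\<in>S. l < k} = card {l\<in>S. l < k'}" and ne: "k \<noteq> k'"
    have lt: "card {l\<in>S. l < a} < card {l\<in>S. l < b}" if "a \<in> S" "b \<in> S" "a < b" for a b
      by (rule psubset_card_mono) (use assms that in auto)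
    from ne have "k < k' \<or> k' < k" by auto
    thus False using lt[of k k'] lt[of k' k] k eq by auto
  qed
  have sub: "(\<lambda>k. card {l\<in>S. l < k}) ` S \<subseteq> {..<card S}"
  proof
    fix c assume "c \<in> (\<lambda>k. card {l\<in>S. l < k}) ` S"
    then obtain k where k: "k \<in> S" "c = card {l\<in>S. l < k}" by auto
    have "card {l\<in>S. l < k} < card S" by (rule psubset_card_mono) (use assms k in auto)
    thus "c \<in> {..<card S}" using k by auto
  qed
  have "card ((\<lambda>k. card {l\<in>S. l < k}) ` S) = card {..<card S}"
    using card_image[OF inj] by simp
  hence "(\<lambda>k. card {l\<in>S. l < k}) ` S = {..<card S}"
    using sub by (intro card_subset_eq) auto
  thus ?thesis using inj by (simp add: bij_betw_def)
qed

lemma enc_dec: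
  assumes "finite S" "r < d ^ card S"
  shows "sys_enc d S (sys_dec d S r) = r"
proof -
  have "sys_enc d S (sys_dec d S r) = (\<Sum>k\<in>S. (r div d ^ card {l\<in>S. l < k} mod d) * d ^ card {l\<in>S. l < k})"
    unfolding sys_enc_def sys_dec_def by (intro sum.cong) auto
  also have "\<dots> = (\<Sum>p<card S. (r div d^p mod d) * d^p)"
    by (rule sum.reindex_bij_betw[OF pos_bij[OF assms(1)], where g = "\<lambda>p. (r div d^p mod d) * d^p"])
  also have "\<dots> = r" using assms by (simp add: digits_sum)
  finally show ?thesis .
qed

lemma dec_in: "d > 0 \<Longrightarrow> sys_dec d S r \<in> configs d S"
  by (auto simp: sys_dec_def configs_def)

lemma card_configs:
  assumes "finite S"
  shows "card (configs d S) = d ^ card S"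
proof -
  have "bij_betw (\<lambda>g. restrict g S) (configs d S) (S \<rightarrow>\<^sub>E {..<d})"
  proof (rule bij_betw_byWitness[where f' = "\<lambda>f k. if k \<in> S then f k else 0"])
  qed (auto simp: configs_def restrict_def PiE_def extensional_def fun_eq_iff)
  hence "card (configs d S) = card (S \<rightarrow>\<^sub>E {..<d})" by (rule bij_betw_same_card)
  thus ?thesis using assms by (simp add: card_PiE)
qed

lemma dec_bij:
  assumes "finite S" "d > 0"
  shows "bij_betw (sys_dec d S) {..<d ^ card S} (configs d S)"
proof -
  have inj: "inj_on (sys_dec d S) {..<d ^ card S}"
    by (rule inj_on_inverseI[where g = "sys_enc d S"]) (use assms in \<open>auto simp: enc_dec\<close>)
  have sub: "sys_dec d S ` {..<d ^ card S} \<subseteq> configs d S" using dec_in assms by auto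
  have fin: "finite (configs d S)"
    using card_configs[OF assms(1), of d] assms by (intro card_ge_0_finite) auto
  have "sys_dec d S ` {..<d ^ card S} = configs d S"
    using card_image[OF inj] card_configs[OF assms(1)] sub fin by (intro card_subset_eq) auto
  thus ?thesis using inj by (simp add: bij_betw_def)
qed

lemma finite_configs: "finite S \<Longrightarrow> d > 0 \<Longrightarrow> finite (configs d S)"
  using card_configs[of S d] by (intro card_ge_0_finite) auto

lemma enc_props:
  assumes "finite S" "d > 0" "g \<in> configs d S"
  shows "sys_enc d S g < d ^ card S" "sys_dec d S (sys_enc d S g) = g"
proof -
  from dec_bij[OF assms(1,2)] assms(3) obtain r where r: "r < d ^ card S" "g = sys_dec d S r"
    by (auto simp: bij_betw_def)
  show "sys_enc d S g < d ^ card S" "sys_dec d S (sys_enc d S g) = g"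
    using r enc_dec[OF assms(1) r(1)] by auto
qed

lemma enc_restr: "sys_enc d S g = sys_enc d S (\<lambda>k. if k \<in> S then g k else 0)"
  unfolding sys_enc_def by (intro sum.cong) auto



lemma adj_index:
  assumes "A \<in> carrier_mat N N" "i < N" "j < N"
  shows "mat_adjoint A $$ (i,j) = cnj (A $$ (j,i))"
  using assms by (simp add: mat_adjoint_def mat_of_rows_def cols_def)

lemma adj_carrier: "A \<in> carrier_mat N N \<Longrightarrow> mat_adjoint (A::complex mat) \<in> carrier_mat N N"
  by (simp add: mat_adjoint_def mat_of_rows_def cols_def)

lemma cnj_if: "cnj (if P then 1 else 0) = (if P then 1 else 0)" by simp

lemma Mvec_inj:
  assumes p: "prime d" and dn: "n + 1 < d" and x: "x \<in> configs d {..<n}" and y: "y \<in> configs d {..<n}"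
    and eq: "Mvec d n x = Mvec d n y"
  shows "x = y"
proof -
  define e where "e k = int (x k) - int (y k)" for k
  define s where "s = (\<Sum>l<n. e l)"
  have s_eq: "s = int (\<Sum>l<n. x l) - int (\<Sum>l<n. y l)" by (simp add: s_def e_def sum_subtractf)
  have dk: "int d dvd e k + s" if k: "k < n" for k
  proof -
    from eq have "(x k + (\<Sum>l<n. x l)) mod d = (y k + (\<Sum>l<n. y l)) mod d"
      unfolding Mvec_def by (metis k)
    hence "int (x k + (\<Sum>l<n. x l)) mod int d = int (y k + (\<Sum>l<n. y l)) mod int d"
      by (metis of_nat_mod)
    hence "int d dvd int (x k + (\<Sum>l<n. x l)) - int (y k + (\<Sum>l<n. y l))"
      by (simp add: mod_eq_dvd_iff)
    thus ?thesis by (simp add: e_def s_eq algebra_simps)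
  qed
  have "int d dvd (\<Sum>k<n. e k + s)" by (rule dvd_sum) (use dk in auto)
  hence "int d dvd (int n + 1) * s" by (simp add: sum.distrib s_def[symmetric] algebra_simps)
  moreover have "prime (int d)" using p by simp
  moreover have "\<not> int d dvd (int n + 1)"
  proof
    assume "int d dvd int n + 1"
    hence "int d \<le> int n + 1" by (intro zdvd_imp_le) auto
    thus False using dn by simp
  qed
  ultimately have ds: "int d dvd s" using prime_dvd_mult_iff by blast
  have "x k = y k" for k
  proof (cases "k < n")
    case True
    with dk ds have "int d dvd e k" using dvd_add_left_iff by blast
    moreover have "x k < d" "y k < d" using x y True by (auto simp: configs_def)
    hence "\<bar>e k\<bar> < int d" by (auto simp: e_def abs_if)
    ultimately have "e k = 0" using dvd_imp_le_int by force
    thus ?thesis by (simp add: e_def)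
  next
    case False thus ?thesis using x y by (auto simp: configs_def)
  qed
  thus ?thesis by auto
qed

lemma Mvec_in: "d > 0 \<Longrightarrow> Mvec d n x \<in> configs d {..<n}"
  by (auto simp: Mvec_def configs_def)

lemma Mvec_bij:
  assumes p: "prime d" and dn: "n + 1 < d"
  shows "bij_betw (Mvec d n) (configs d {..<n}) (configs d {..<n})"
proof -
  have d0: "d > 0" using dn by auto
  have inj: "inj_on (Mvec d n) (configs d {..<n})" using Mvec_inj[OF p dn] by (auto intro: inj_onI)
  have "Mvec d n ` configs d {..<n} = configs d {..<n}"
    using card_image[OF inj] Mvec_in[OF d0] finite_configs[of "{..<n}" d] d0
    by (intro card_subset_eq) auto
  thus ?thesis using inj by (simp add: bij_betw_def)
qed

lemma U_carrier: "U_dn d n \<in> carrier_mat (d^n) (d^n)" by (simp add: U_dn_def)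

lemma U_index: "r < d^n \<Longrightarrow> c < d^n \<Longrightarrow>
  U_dn d n $$ (r,c) = (if sys_dec d {..<n} r = Mvec d n (sys_dec d {..<n} c) then 1 else 0)"
  by (simp add: U_dn_def)

lemma unitary_U:
  assumes p: "prime d" and dn: "n + 1 < d"
  shows "unitary_mat (U_dn d n)"
proof -
  have d0: "d > 0" using dn by auto
  let ?N = "d^n"
  let ?X = "configs d {..<n}"
  let ?dec = "sys_dec d {..<n}"
  have bij: "bij_betw ?dec {..<?N} ?X" using dec_bij[of "{..<n}" d] d0 by simp
  have U: "U_dn d n \<in> carrier_mat ?N ?N" by (rule U_carrier)
  have Ua: "mat_adjoint (U_dn d n) \<in> carrier_mat ?N ?N" by (rule adj_carrier[OF U])
  have mb: "bij_betw (Mvec d n) ?X ?X" by (rule Mvec_bij[OF p dn])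
  have decinj: "?dec r = ?dec s \<Longrightarrow> r < ?N \<Longrightarrow> s < ?N \<Longrightarrow> r = s" for r s
    using bij by (auto simp: bij_betw_def inj_on_def)
  have "U_dn d n * mat_adjoint (U_dn d n) = 1\<^sub>m ?N"
  proof (rule eq_matI)
    fix r s assume r: "r < dim_row (1\<^sub>m ?N)" and s: "s < dim_col (1\<^sub>m ?N)"
    have "(U_dn d n * mat_adjoint (U_dn d n)) $$ (r,s) =
      (\<Sum>t<?N. (if ?dec r = Mvec d n (?dec t) then 1 else 0) * (if ?dec s = Mvec d n (?dec t) then 1 else 0))"
      using r s U Ua by (simp add: scalar_prod_def atLeast0LessThan adj_index U_index cnj_if)
    also have "\<dots> = (\<Sum>y\<in>?X. (if ?dec r = Mvec d n y then 1 else 0) * (if ?dec s = Mvec d n y then 1 else 0))"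
      by (rule sum.reindex_bij_betw[OF bij, where g = "\<lambda>y. (if ?dec r = Mvec d n y then 1 else 0) * (if ?dec s = Mvec d n y then 1 else 0)"])
    also have "\<dots> = (\<Sum>y\<in>?X. if y = inv_into ?X (Mvec d n) (?dec r) \<and> r = s then 1 else (0::complex))"
    proof (rule sum.cong[OF refl])
      fix y assume y: "y \<in> ?X"
      have dr: "?dec r \<in> ?X" "?dec s \<in> ?X" using dec_in d0 by auto
      have ij: "inj_on (Mvec d n) ?X" by (rule bij_betw_imp_inj_on[OF mb])
      have im: "?dec r \<in> Mvec d n ` ?X" using bij_betw_imp_surj_on[OF mb] dr(1) by simp
      have "?dec r = Mvec d n y \<longleftrightarrow> y = inv_into ?X (Mvec d n) (?dec r)"
      proof
        assume "?dec r = Mvec d n y" thus "y = inv_into ?X (Mvec d n) (?dec r)"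
          using inv_into_f_f[OF ij y] by simp
      next
        assume "y = inv_into ?X (Mvec d n) (?dec r)" thus "?dec r = Mvec d n y"
          using f_inv_into_f[OF im] by simp
      qed
      moreover have "r \<noteq> s \<Longrightarrow> ?dec r \<noteq> ?dec s" using decinj[of r s] r s by auto
      ultimately show "(if ?dec r = Mvec d n y then 1 else 0) * (if ?dec s = Mvec d n y then 1 else 0) =
        (if y = inv_into ?X (Mvec d n) (?dec r) \<and> r = s then 1 else (0::complex))"
        by (cases "r = s") auto
    qed
    also have "\<dots> = (if r = s then 1 else 0)"
    proof -
      have "?dec r \<in> Mvec d n ` ?X" using bij_betw_imp_surj_on[OF mb] dec_in[OF d0] by simp
      hence iX: "inv_into ?X (Mvec d n) (?dec r) \<in> ?X" by (rule inv_into_into)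
      have fX: "finite ?X" using finite_configs[of "{..<n}" d] d0 by simp
      show ?thesis
      proof (cases "r = s")
        case True thus ?thesis using iX fX by (simp add: sum.delta')
      qed simp
    qed
    finally show "(U_dn d n * mat_adjoint (U_dn d n)) $$ (r,s) = 1\<^sub>m ?N $$ (r,s)" using r s by simp
  qed (use U Ua in auto)
  moreover have "mat_adjoint (U_dn d n) * U_dn d n = 1\<^sub>m ?N"
  proof (rule eq_matI)
    fix r s assume r: "r < dim_row (1\<^sub>m ?N)" and s: "s < dim_col (1\<^sub>m ?N)"
    have "(mat_adjoint (U_dn d n) * U_dn d n) $$ (r,s) =
      (\<Sum>t<?N. (if ?dec t = Mvec d n (?dec r) then 1 else 0) * (if ?dec t = Mvec d n (?dec s) then 1 else 0))"
      using r s U Ua by (simp add: scalar_prod_def atLeast0LessThan adj_index U_index cnj_if)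
    also have "\<dots> = (\<Sum>z\<in>?X. (if z = Mvec d n (?dec r) then 1 else 0) * (if z = Mvec d n (?dec s) then 1 else 0))"
      by (rule sum.reindex_bij_betw[OF bij, where g = "\<lambda>z. (if z = Mvec d n (?dec r) then 1 else 0) * (if z = Mvec d n (?dec s) then 1 else 0)"])
    also have "\<dots> = (\<Sum>z\<in>?X. if z = Mvec d n (?dec r) \<and> r = s then 1 else (0::complex))"
    proof (rule sum.cong[OF refl])
      fix z assume z: "z \<in> ?X"
      have dr: "?dec r \<in> ?X" "?dec s \<in> ?X" using dec_in d0 by auto
      have "Mvec d n (?dec r) = Mvec d n (?dec s) \<longleftrightarrow> r = s"
        using Mvec_inj[OF p dn dr] decinj[of r s] r s by auto
      thus "(if z = Mvec d n (?dec r) then 1 else 0) * (if z = Mvec d n (?dec s) then 1 else 0) =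
        (if z = Mvec d n (?dec r) \<and> r = s then 1 else (0::complex))" by auto
    qed
    also have "\<dots> = (if r = s then 1 else 0)"
    proof (cases "r = s")
      case True thus ?thesis using finite_configs[of "{..<n}" d] d0 Mvec_in[OF d0] by (simp add: sum.delta')
    qed simp
    finally show "(mat_adjoint (U_dn d n) * U_dn d n) $$ (r,s) = 1\<^sub>m ?N $$ (r,s)" using r s by simp
  qed (use U Ua in auto)
  ultimately show ?thesis unfolding unitary_mat_def using U by blast
qed



definition emb :: "nat \<Rightarrow> nat \<Rightarrow> (nat \<Rightarrow> nat) \<Rightarrow> (nat \<Rightarrow> nat)" where
  "emb d n x = (\<lambda>k. if k < n then x k else if k < 2*n then Mvec d n x (k - n) else 0)"

definition restr :: "nat set \<Rightarrow> (nat \<Rightarrow> nat) \<Rightarrow> (nat \<Rightarrow> nat)" where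
  "restr S g = (\<lambda>k. if k \<in> S then g k else 0)"

lemma emb_in: "d > 0 \<Longrightarrow> x \<in> configs d {..<n} \<Longrightarrow> emb d n x \<in> configs d {..<2*n}"
  by (auto simp: emb_def configs_def Mvec_def)

lemma restr_in: "d > 0 \<Longrightarrow> g \<in> configs d U \<Longrightarrow> restr S g \<in> configs d S"
  by (auto simp: restr_def configs_def)

lemma psi_val:
  assumes d0: "d > 0" and g: "g \<in> configs d {..<2*n}"
  shows "choi_vec d n (U_dn d n) g =
    (if \<exists>x\<in>configs d {..<n}. g = emb d n x then 1 else 0) / complex_of_real (sqrt (real d ^ n))"
proof -
  define xo where "xo = (\<lambda>k. g (n + k))"
  define ri where "ri = restr {..<n} g"
  have xo: "xo \<in> configs d {..<n}" using g by (auto simp: configs_def xo_def)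
  have ri: "ri \<in> configs d {..<n}" using g by (auto simp: configs_def ri_def restr_def)
  have e1: "sys_enc d {..<n} g = sys_enc d {..<n} ri"
    using enc_restr[of d "{..<n}" g] by (simp add: ri_def restr_def)
  have Ue: "U_dn d n $$ (sys_enc d {..<n} xo, sys_enc d {..<n} ri) = (if xo = Mvec d n ri then 1 else 0)"
    using enc_props[OF _ d0 xo] enc_props[OF _ d0 ri] by (simp add: U_index)
  have iff: "xo = Mvec d n ri \<longleftrightarrow> (\<exists>x\<in>configs d {..<n}. g = emb d n x)"
  proof
    assume h: "xo = Mvec d n ri"
    have "g = emb d n ri"
    proof
      fix k
      show "g k = emb d n ri k"
      proof (cases "k < n")
        case True thus ?thesis by (simp add: emb_def ri_def restr_def)
      next
        case False
        show ?thesis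
        proof (cases "k < 2*n")
          case True
          have "g k = xo (k - n)" using False by (simp add: xo_def)
          thus ?thesis using h True False by (simp add: emb_def)
        next
          case F2: False thus ?thesis using g False by (auto simp: emb_def configs_def)
        qed
      qed
    qed
    thus "\<exists>x\<in>configs d {..<n}. g = emb d n x" using ri by blast
  next
    assume "\<exists>x\<in>configs d {..<n}. g = emb d n x"
    then obtain x where x: "x \<in> configs d {..<n}" and gx: "g = emb d n x" by blast
    have rx: "ri = x" using x by (auto simp: ri_def restr_def gx emb_def configs_def)
    show "xo = Mvec d n ri"
    proof
      fix k show "xo k = Mvec d n ri k"
        by (cases "k < n") (auto simp: xo_def gx emb_def rx Mvec_def)
    qed
  qed
  show ?thesis unfolding choi_vec_def e1[symmetric] xo_def[symmetric]
    using Ue e1 iff by simp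
qed

lemma decomp:
  assumes S: "S \<subseteq> {..<2*n}" and a: "a \<in> configs d S" and h: "h \<in> configs d ({..<2*n} - S)"
    and x: "emb d n x \<in> configs d {..<2*n}"
  shows "((\<lambda>k. a k + h k) = emb d n x) \<longleftrightarrow> a = restr S (emb d n x) \<and> h = restr ({..<2*n} - S) (emb d n x)"
proof
  assume e: "(\<lambda>k. a k + h k) = emb d n x"
  have "a k = restr S (emb d n x) k \<and> h k = restr ({..<2*n} - S) (emb d n x) k" for k
    using fun_cong[OF e, of k] a h x S by (auto simp: restr_def configs_def)
  thus "a = restr S (emb d n x) \<and> h = restr ({..<2*n} - S) (emb d n x)" by auto
next
  assume "a = restr S (emb d n x) \<and> h = restr ({..<2*n} - S) (emb d n x)"
  thus "(\<lambda>k. a k + h k) = emb d n x" using x S by (auto simp: restr_def configs_def fun_eq_iff)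
qed

lemma sum_in: "a \<in> configs d S \<Longrightarrow> h \<in> configs d T \<Longrightarrow> S \<inter> T = {} \<Longrightarrow> (\<lambda>k. a k + h k) \<in> configs d (S \<union> T)"
  by (auto simp: configs_def)



abbreviation "psiU d n \<equiv> choi_vec d n (U_dn d n)"

lemma sum_indicator: "finite A \<Longrightarrow> (\<Sum>h\<in>A. if P h then (c::complex) else 0) = of_nat (card {h\<in>A. P h}) * c"
  by (simp add: sum.inter_filter[symmetric])

lemma aux_cnj: "(if P then 1 else 0) / complex_of_real r * cnj ((if Q then 1 else 0) / complex_of_real r)
   = (if P \<and> Q then 1 / (complex_of_real r * complex_of_real r) else 0)"
  by (cases P; cases Q) (simp_all add: complex_cnj_divide)

lemma Ffor:
  assumes d0: "d > 0" and S: "S \<subseteq> {..<2*n}" and a: "a \<in> configs d S" and b: "b \<in> configs d S"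
  shows "(\<Sum>h\<in>configs d ({..<2*n}-S). psiU d n (\<lambda>k. a k + h k) * cnj (psiU d n (\<lambda>k. b k + h k)))
    = of_nat (card {h\<in>configs d ({..<2*n}-S).
        (\<exists>x\<in>configs d {..<n}. a = restr S (emb d n x) \<and> h = restr ({..<2*n}-S) (emb d n x)) \<and>
        (\<exists>y\<in>configs d {..<n}. b = restr S (emb d n y) \<and> h = restr ({..<2*n}-S) (emb d n y))})
      * (1 / of_nat (d^n))"
proof -
  let ?T = "{..<2*n}-S"
  let ?P = "\<lambda>a h. \<exists>x\<in>configs d {..<n}. a = restr S (emb d n x) \<and> h = restr ?T (emb d n x)"
  have un: "S \<union> ?T = {..<2*n}" using S by auto
  have pv: "psiU d n (\<lambda>k. c k + h k) = (if ?P c h then 1 else 0) / complex_of_real (sqrt (real d ^ n))"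
    if c: "c \<in> configs d S" and h: "h \<in> configs d ?T" for c h
  proof -
    have "(\<lambda>k. c k + h k) \<in> configs d {..<2*n}" using sum_in[OF c h] un by auto
    moreover have "(\<exists>x\<in>configs d {..<n}. (\<lambda>k. c k + h k) = emb d n x) \<longleftrightarrow> ?P c h"
      using decomp[OF S c h] emb_in[OF d0] by blast
    ultimately show ?thesis by (simp add: psi_val[OF d0])
  qed
  have sq: "complex_of_real (sqrt (real d ^ n)) * complex_of_real (sqrt (real d ^ n)) = of_nat (d^n)"
    by (simp flip: of_real_mult)
  have "(\<Sum>h\<in>configs d ?T. psiU d n (\<lambda>k. a k + h k) * cnj (psiU d n (\<lambda>k. b k + h k)))
     = (\<Sum>h\<in>configs d ?T. if ?P a h \<and> ?P b h then 1 / of_nat (d^n) else 0)"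
  proof (rule sum.cong[OF refl])
    fix h assume h: "h \<in> configs d ?T"
    show "psiU d n (\<lambda>k. a k + h k) * cnj (psiU d n (\<lambda>k. b k + h k)) = (if ?P a h \<and> ?P b h then 1 / of_nat (d^n) else 0)"
      unfolding pv[OF a h] pv[OF b h] aux_cnj sq ..
  qed
  also have "\<dots> = of_nat (card {h\<in>configs d ?T. ?P a h \<and> ?P b h}) * (1 / of_nat (d^n))"
    by (rule sum_indicator) (use finite_configs d0 in auto)
  finally show ?thesis .
qed

lemma mat_lemma:
  assumes fS: "finite S" and d0: "d > 0"
    and sqF: "\<And>a c. a \<in> configs d S \<Longrightarrow> c \<in> configs d S \<Longrightarrow>
          (\<Sum>b\<in>configs d S. F a b * F b c) = complex_of_real l * F a c"
    and trF: "(\<Sum>a\<in>configs d S. F a a) = 1" and l: "l > 0"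
  shows "vn_entropy (mat (d ^ card S) (d ^ card S) (\<lambda>(r,c). F (sys_dec d S r) (sys_dec d S c))) = - log 2 l"
proof -
  let ?m = "d ^ card S"
  let ?A = "mat ?m ?m (\<lambda>(r,c). F (sys_dec d S r) (sys_dec d S c))"
  have bij: "bij_betw (sys_dec d S) {..<?m} (configs d S)" by (rule dec_bij[OF fS d0])
  have A: "?A \<in> carrier_mat ?m ?m" by simp
  have "?A * ?A = complex_of_real l \<cdot>\<^sub>m ?A"
  proof (rule eq_matI)
    fix r s assume r: "r < dim_row (complex_of_real l \<cdot>\<^sub>m ?A)" and s: "s < dim_col (complex_of_real l \<cdot>\<^sub>m ?A)"
    have "(?A * ?A) $$ (r,s) = (\<Sum>t<?m. F (sys_dec d S r) (sys_dec d S t) * F (sys_dec d S t) (sys_dec d S s))"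
      using r s by (simp add: scalar_prod_def atLeast0LessThan)
    also have "\<dots> = (\<Sum>b\<in>configs d S. F (sys_dec d S r) b * F b (sys_dec d S s))"
      by (rule sum.reindex_bij_betw[OF bij, where g = "\<lambda>b. F (sys_dec d S r) b * F b (sys_dec d S s)"])
    also have "\<dots> = complex_of_real l * F (sys_dec d S r) (sys_dec d S s)"
      by (rule sqF) (use dec_in d0 in auto)
    finally show "(?A * ?A) $$ (r,s) = (complex_of_real l \<cdot>\<^sub>m ?A) $$ (r,s)" using r s by simp
  qed auto
  moreover have "(\<Sum>i<?m. ?A $$ (i,i)) = 1"
  proof -
    have "(\<Sum>i<?m. ?A $$ (i,i)) = (\<Sum>i<?m. F (sys_dec d S i) (sys_dec d S i))" by simp
    also have "\<dots> = (\<Sum>a\<in>configs d S. F a a)"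
      by (rule sum.reindex_bij_betw[OF bij, where g = "\<lambda>a. F a a"])
    finally show ?thesis using trF by simp
  qed
  ultimately show ?thesis by (intro proj_entropy[OF A _ l])
qed

lemma red_form:
  "reduced_state d N psi S = mat (d ^ card S) (d ^ card S)
     (\<lambda>(r,c). (\<lambda>a b. \<Sum>h\<in>configs d ({..<N} - S). psi (\<lambda>k. a k + h k) * cnj (psi (\<lambda>k. b k + h k)))
        (sys_dec d S r) (sys_dec d S c))"
  unfolding reduced_state_def by simp



lemma card_X0: "card (configs d {..<n}) = d ^ n" by (simp add: card_configs)

lemma route_beta:
  assumes d0: "d > 0" and S: "S \<subseteq> {..<2*n}"
    and injT: "inj_on (\<lambda>x. restr ({..<2*n}-S) (emb d n x)) (configs d {..<n})"
    and fib: "\<And>a. a \<in> configs d S \<Longrightarrow> card {x\<in>configs d {..<n}. restr S (emb d n x) = a} = \<alpha>"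
    and ar: "\<alpha> * d ^ card S = d ^ n"
  shows "ent d (2*n) (psiU d n) S = - log 2 (real \<alpha> / real d ^ n)"
proof -
  let ?T = "{..<2*n}-S"
  let ?X = "configs d {..<n}"
  let ?pS = "\<lambda>x. restr S (emb d n x)"
  let ?pT = "\<lambda>x. restr ?T (emb d n x)"
  let ?P = "\<lambda>a h. \<exists>x\<in>?X. a = ?pS x \<and> h = ?pT x"
  define F where "F = (\<lambda>a b. \<Sum>h\<in>configs d ?T. psiU d n (\<lambda>k. a k + h k) * cnj (psiU d n (\<lambda>k. b k + h k)))"
  define v where "v = (of_nat \<alpha> * (1 / of_nat (d^n)) :: complex)"
  have fS: "finite S" using S finite_subset by blast
  have Fv: "F a b = (if a = b then v else 0)" if a: "a \<in> configs d S" and b: "b \<in> configs d S" for a b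
  proof -
    have "card {h\<in>configs d ?T. ?P a h \<and> ?P b h} = (if a = b then \<alpha> else 0)"
    proof (cases "a = b")
      case True
      have "{h\<in>configs d ?T. ?P a h \<and> ?P b h} = ?pT ` {x\<in>?X. ?pS x = a}"
      proof (intro equalityI subsetI)
        fix h assume "h \<in> {h\<in>configs d ?T. ?P a h \<and> ?P b h}"
        then obtain x where "x\<in>?X" "a = ?pS x" "h = ?pT x" by blast
        thus "h \<in> ?pT ` {x\<in>?X. ?pS x = a}" by auto
      next
        fix h assume "h \<in> ?pT ` {x\<in>?X. ?pS x = a}"
        then obtain x where x: "x\<in>?X" "?pS x = a" "h = ?pT x" by blast
        have "h \<in> configs d ?T" using x restr_in[OF d0 emb_in[OF d0 x(1)]] by simp
        moreover have "?P a h" using x by blast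
        ultimately show "h \<in> {h\<in>configs d ?T. ?P a h \<and> ?P b h}" using True by simp
      qed
      moreover have "inj_on ?pT {x\<in>?X. ?pS x = a}" using injT by (rule inj_on_subset) auto
      ultimately show ?thesis using True fib[OF a] by (simp add: card_image)
    next
      case False
      have E: "{h\<in>configs d ?T. ?P a h \<and> ?P b h} = {}"
      proof (rule ccontr)
        assume "{h\<in>configs d ?T. ?P a h \<and> ?P b h} \<noteq> {}"
        then obtain h x y where xy: "x \<in> ?X" "y \<in> ?X" "a = ?pS x" "h = ?pT x" "b = ?pS y" "h = ?pT y" by blast
        hence "x = y" using injT by (auto dest: inj_onD)
        with xy False show False by simp
      qed
      show ?thesis using False unfolding E by simp
    qed
    thus ?thesis unfolding F_def Ffor[OF d0 S a b] v_def by simp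
  qed
  have "vn_entropy (mat (d ^ card S) (d ^ card S) (\<lambda>(r,c). F (sys_dec d S r) (sys_dec d S c)))
      = - log 2 (real \<alpha> / real d ^ n)"
  proof (rule mat_lemma[OF fS d0])
    fix a c assume a: "a \<in> configs d S" and c: "c \<in> configs d S"
    have "(\<Sum>b\<in>configs d S. F a b * F b c) = (\<Sum>b\<in>configs d S. if b = a then (if a = c then v * v else 0) else 0)"
      by (rule sum.cong[OF refl]) (use a c Fv in auto)
    also have "\<dots> = (if a = c then v * v else 0)" using a finite_configs[OF fS d0] by simp
    also have "\<dots> = complex_of_real (real \<alpha> / real d ^ n) * F a c"
      using Fv[OF a c] by (simp add: v_def)
    finally show "(\<Sum>b\<in>configs d S. F a b * F b c) = complex_of_real (real \<alpha> / real d ^ n) * F a c" .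
  next
    have "(\<Sum>a\<in>configs d S. F a a) = of_nat (card (configs d S)) * v" using Fv by simp
    also have "\<dots> = 1"
    proof -
      have "(of_nat (\<alpha> * d ^ card S) :: complex) = of_nat (d ^ n)" using ar by simp
      hence "of_nat \<alpha> * (of_nat d ^ card S :: complex) = of_nat d ^ n" by simp
      thus ?thesis using d0 unfolding v_def card_configs[OF fS] by (simp add: field_simps)
    qed
    finally show "(\<Sum>a\<in>configs d S. F a a) = 1" .
  next
    have "\<alpha> > 0" using ar d0 by (cases \<alpha>) auto
    thus "real \<alpha> / real d ^ n > 0" using d0 by simp
  qed
  thus ?thesis unfolding ent_def red_form F_def by simp
qed



lemma route_alpha:
  assumes d0: "d > 0" and S: "S \<subseteq> {..<2*n}"
    and injS: "inj_on (\<lambda>x. restr S (emb d n x)) (configs d {..<n})"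
    and cls: "\<And>x. x \<in> configs d {..<n} \<Longrightarrow>
       card {y\<in>configs d {..<n}. restr ({..<2*n}-S) (emb d n y) = restr ({..<2*n}-S) (emb d n x)} = \<beta>"
    and b0: "\<beta> > 0"
  shows "ent d (2*n) (psiU d n) S = - log 2 (real \<beta> / real d ^ n)"
proof -
  let ?T = "{..<2*n}-S"
  let ?X = "configs d {..<n}"
  let ?pS = "\<lambda>x. restr S (emb d n x)"
  let ?pT = "\<lambda>x. restr ?T (emb d n x)"
  let ?P = "\<lambda>a h. \<exists>x\<in>?X. a = ?pS x \<and> h = ?pT x"
  define R where "R = (\<lambda>a b. \<exists>x\<in>?X. \<exists>y\<in>?X. a = ?pS x \<and> b = ?pS y \<and> ?pT x = ?pT y)"
  define F where "F = (\<lambda>a b. \<Sum>h\<in>configs d ?T. psiU d n (\<lambda>k. a k + h k) * cnj (psiU d n (\<lambda>k. b k + h k)))"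
  define u where "u = (1 / of_nat (d^n) :: complex)"
  have fS: "finite S" using S finite_subset by blast
  have fX: "finite ?X" using finite_configs d0 by auto
  have pT_in: "?pT x \<in> configs d ?T" if "x \<in> ?X" for x using restr_in[OF d0 emb_in[OF d0 that]] .
  have pS_in: "?pS x \<in> configs d S" if "x \<in> ?X" for x using restr_in[OF d0 emb_in[OF d0 that]] .
  have Fv: "F a b = (if R a b then u else 0)" if a: "a \<in> configs d S" and b: "b \<in> configs d S" for a b
  proof -
    have "card {h\<in>configs d ?T. ?P a h \<and> ?P b h} = (if R a b then 1 else 0)"
    proof (cases "R a b")
      case True
      then obtain x y where xy: "x \<in> ?X" "y \<in> ?X" "a = ?pS x" "b = ?pS y" "?pT x = ?pT y"
        unfolding R_def by blast
      have E: "{h\<in>configs d ?T. ?P a h \<and> ?P b h} = {?pT x}"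
      proof (intro equalityI subsetI)
        fix h assume "h \<in> {h\<in>configs d ?T. ?P a h \<and> ?P b h}"
        then obtain x' where x': "x' \<in> ?X" "a = ?pS x'" "h = ?pT x'" by blast
        have "x' = x" using injS x' xy by (auto dest: inj_onD)
        thus "h \<in> {?pT x}" using x' by simp
      next
        fix h assume h: "h \<in> {?pT x}"
        have "?P a h" using h xy by blast
        moreover have "?P b h" using h xy(2,4,5) by (intro bexI[of _ y]) auto
        ultimately show "h \<in> {h\<in>configs d ?T. ?P a h \<and> ?P b h}" using h pT_in[OF xy(1)] by simp
      qed
      show ?thesis using True unfolding E by simp
    next
      case False
      have E: "{h\<in>configs d ?T. ?P a h \<and> ?P b h} = {}"
      proof (rule ccontr)
        assume "{h\<in>configs d ?T. ?P a h \<and> ?P b h} \<noteq> {}"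
        then obtain h x y where hh: "x \<in> ?X" "y \<in> ?X" "a = ?pS x" "h = ?pT x" "b = ?pS y" "h = ?pT y" by blast
        hence "?pT x = ?pT y" by simp
        hence "R a b" unfolding R_def using hh(1,2,3,5) by blast
        with False show False by simp
      qed
      show ?thesis using False unfolding E by simp
    qed
    thus ?thesis unfolding F_def Ffor[OF d0 S a b] u_def by simp
  qed
  have Rcard: "card {b\<in>configs d S. R a b \<and> R b c} = (if R a c then \<beta> else 0)"
    if a: "a \<in> configs d S" and c: "c \<in> configs d S" for a c
  proof (cases "\<exists>x\<in>?X. a = ?pS x")
    case True
    then obtain x where x: "x \<in> ?X" "a = ?pS x" by blast
    have Ra: "R a b \<longleftrightarrow> (\<exists>y\<in>?X. b = ?pS y \<and> ?pT x = ?pT y)" for b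
    proof
      assume "R a b"
      then obtain x' y where "x' \<in> ?X" "y \<in> ?X" "a = ?pS x'" "b = ?pS y" "?pT x' = ?pT y" unfolding R_def by blast
      moreover have "x' = x" using injS x \<open>x' \<in> ?X\<close> \<open>a = ?pS x'\<close> by (auto dest: inj_onD)
      ultimately show "\<exists>y\<in>?X. b = ?pS y \<and> ?pT x = ?pT y" by blast
    next
      assume "\<exists>y\<in>?X. b = ?pS y \<and> ?pT x = ?pT y"
      thus "R a b" unfolding R_def using x by blast
    qed
    show ?thesis
    proof (cases "R a c")
      case True
      then obtain z where z: "z \<in> ?X" "c = ?pS z" "?pT x = ?pT z" using Ra by blast
      have E: "{b\<in>configs d S. R a b \<and> R b c} = ?pS ` {y\<in>?X. ?pT y = ?pT x}"
      proof (intro equalityI subsetI)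
        fix b assume "b \<in> {b\<in>configs d S. R a b \<and> R b c}"
        then obtain y where "y \<in> ?X" "b = ?pS y" "?pT x = ?pT y" using Ra by blast
        thus "b \<in> ?pS ` {y\<in>?X. ?pT y = ?pT x}" by auto
      next
        fix b assume "b \<in> ?pS ` {y\<in>?X. ?pT y = ?pT x}"
        then obtain y where y: "y \<in> ?X" "b = ?pS y" "?pT y = ?pT x" by blast
        have "R a b" using Ra y by auto
        moreover have "R b c" unfolding R_def using y z by auto
        ultimately show "b \<in> {b\<in>configs d S. R a b \<and> R b c}" using pS_in[OF y(1)] y by simp
      qed
      have "inj_on ?pS {y\<in>?X. ?pT y = ?pT x}" using injS by (rule inj_on_subset) auto
      hence "card {b\<in>configs d S. R a b \<and> R b c} = card {y\<in>?X. ?pT y = ?pT x}"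
        unfolding E by (rule card_image)
      thus ?thesis using True cls[OF x(1)] by simp
    next
      case False
      have E: "{b\<in>configs d S. R a b \<and> R b c} = {}"
      proof (rule ccontr)
        assume "{b\<in>configs d S. R a b \<and> R b c} \<noteq> {}"
        then obtain b where "R a b" "R b c" by blast
        then obtain y where y: "y \<in> ?X" "b = ?pS y" "?pT x = ?pT y" using Ra by blast
        from \<open>R b c\<close> obtain y' z where yz: "y' \<in> ?X" "z \<in> ?X" "b = ?pS y'" "c = ?pS z" "?pT y' = ?pT z"
          unfolding R_def by blast
        have "y' = y" using injS y yz by (auto dest: inj_onD)
        hence "R a c" unfolding R_def using x y yz by auto
        with False show False by simp
      qed
      show ?thesis using False unfolding E by simp
    qed
  next
    case False
    have nR: "\<not> R a b" for b using False unfolding R_def by blast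
    show ?thesis using nR by simp
  qed
  have "vn_entropy (mat (d ^ card S) (d ^ card S) (\<lambda>(r,c). F (sys_dec d S r) (sys_dec d S c)))
      = - log 2 (real \<beta> / real d ^ n)"
  proof (rule mat_lemma[OF fS d0])
    fix a c assume a: "a \<in> configs d S" and c: "c \<in> configs d S"
    have "(\<Sum>b\<in>configs d S. F a b * F b c) = (\<Sum>b\<in>configs d S. if R a b \<and> R b c then u * u else 0)"
      by (rule sum.cong[OF refl]) (use a c Fv in auto)
    also have "\<dots> = of_nat (card {b\<in>configs d S. R a b \<and> R b c}) * (u * u)"
      by (rule sum_indicator) (use finite_configs[OF fS d0] in auto)
    also have "\<dots> = complex_of_real (real \<beta> / real d ^ n) * F a c"
      using Fv[OF a c] Rcard[OF a c] by (simp add: u_def)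
    finally show "(\<Sum>b\<in>configs d S. F a b * F b c) = complex_of_real (real \<beta> / real d ^ n) * F a c" .
  next
    have "(\<Sum>a\<in>configs d S. F a a) = (\<Sum>a\<in>configs d S. if R a a then u else 0)"
      by (rule sum.cong[OF refl]) (use Fv in auto)
    also have "\<dots> = of_nat (card {a\<in>configs d S. R a a}) * u"
      by (rule sum_indicator) (use finite_configs[OF fS d0] in auto)
    also have "{a\<in>configs d S. R a a} = ?pS ` ?X"
    proof (intro equalityI subsetI)
      fix a assume "a \<in> {a\<in>configs d S. R a a}"
      then obtain x where "x \<in> ?X" "a = ?pS x" unfolding R_def by blast
      thus "a \<in> ?pS ` ?X" by blast
    next
      fix a assume "a \<in> ?pS ` ?X"
      then obtain x where x: "x \<in> ?X" "a = ?pS x" by blast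
      have "R a a" unfolding R_def using x by blast
      thus "a \<in> {a\<in>configs d S. R a a}" using x pS_in by simp
    qed
    also have "card (?pS ` ?X) = d ^ n" using card_image[OF injS] card_X0 by simp
    finally show "(\<Sum>a\<in>configs d S. F a a) = 1" using d0 by (simp add: u_def)
  next
    show "real \<beta> / real d ^ n > 0" using d0 b0 by simp
  qed
  thus ?thesis unfolding ent_def red_form F_def by simp
qed



lemma restr_eq_iff: "a \<in> configs d S \<Longrightarrow> (\<lambda>k. if k \<in> S then g k else 0) = a \<longleftrightarrow> (\<forall>k\<in>S. g k = a k)"
  by (auto simp: configs_def fun_eq_iff)

lemma F1:
  assumes fN: "finite N" and J: "J \<subseteq> N" and a: "\<forall>k\<in>J. a k < d"
  shows "card {x\<in>configs d N. \<forall>k\<in>J. x k = a k} = d ^ card (N - J)"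
proof -
  have "bij_betw (\<lambda>x k. if k \<in> N - J then x k else 0) {x\<in>configs d N. \<forall>k\<in>J. x k = a k} (configs d (N - J))"
    by (rule bij_betw_byWitness[where f' = "\<lambda>z k. if k \<in> J then a k else z k"])
       (use J a in \<open>auto simp: configs_def fun_eq_iff\<close>)
  hence "card {x\<in>configs d N. \<forall>k\<in>J. x k = a k} = card (configs d (N - J))" by (rule bij_betw_same_card)
  thus ?thesis using fN by (simp add: card_configs)
qed

lemma cancel_mod:
  assumes cw: "coprime w d" and a: "a < d" and b: "b < d" and eq: "(C + w * a) mod d = (C + w * b) mod (d::nat)"
  shows "a = b"
proof -
  have "int (C + w * a) mod int d = int (C + w * b) mod int d" using eq by (metis of_nat_mod)
  hence "int d dvd int (C + w * a) - int (C + w * b)" by (simp add: mod_eq_dvd_iff)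
  hence "int d dvd int w * (int a - int b)" by (simp add: algebra_simps)
  moreover have "coprime (int d) (int w)" using cw by (simp add: coprime_commute)
  ultimately have "int d dvd int a - int b" using coprime_dvd_mult_right_iff by blast
  moreover have "\<bar>int a - int b\<bar> < int d" using a b by auto
  ultimately have "int a - int b = 0"
    using dvd_imp_le_int[of "int a - int b" "int d"] by (cases "int a - int b = 0") auto
  thus ?thesis by simp
qed

lemma sol_exists:
  assumes cw: "coprime w d" and d0: "d > 0" and v: "v < d"
  shows "\<exists>t<d. (C + w * t) mod d = (v::nat)"
proof -
  have inj: "inj_on (\<lambda>t. (C + w * t) mod d) {..<d}"
  proof (rule inj_onI)
    fix a b assume "a \<in> {..<d}" "b \<in> {..<d}" "(C + w * a) mod d = (C + w * b) mod d"
    thus "a = b" using cancel_mod[OF cw, of a b C] by simp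
  qed
  have sub: "(\<lambda>t. (C + w * t) mod d) ` {..<d} \<subseteq> {..<d}" using d0 by auto
  have "(\<lambda>t. (C + w * t) mod d) ` {..<d} = {..<d}"
    using card_image[OF inj] by (intro card_subset_eq[OF _ sub]) auto
  hence "v \<in> (\<lambda>t. (C + w * t) mod d) ` {..<d}" using v by simp
  then obtain t where "t \<in> {..<d}" "(C + w * t) mod d = v" by blast
  thus ?thesis by auto
qed

lemma F2:
  assumes fN: "finite N" and J: "J \<subseteq> N" and kz: "kz \<in> N - J" and a: "\<forall>k\<in>J. a k < d"
    and d0: "d > 0" and cw: "coprime w d" and v: "v < d"
    and lin: "\<And>x t. f (x(kz := t)) = f (x(kz := 0)) + w * t"
  shows "card {x\<in>configs d N. (\<forall>k\<in>J. x k = a k) \<and> f x mod d = v} = d ^ (card (N - J) - 1)"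
proof -
  define sol where "sol = (\<lambda>C. SOME t. t < d \<and> (C + w * t) mod d = v)"
  have sol: "sol C < d \<and> (C + w * sol C) mod d = v" for C
    unfolding sol_def by (rule someI_ex) (use sol_exists[OF cw d0 v] in blast)
  have solu: "t = sol C" if "t < d" "(C + w * t) mod d = v" for t C
    using cancel_mod[OF cw that(1), of "sol C" C] sol[of C] that by auto
  let ?A = "{x\<in>configs d N. (\<forall>k\<in>J. x k = a k) \<and> f x mod d = v}"
  let ?B = "{z\<in>configs d (N - {kz}). \<forall>k\<in>J. z k = a k}"
  have kzJ: "kz \<notin> J" "kz \<in> N" using kz by auto
  have "bij_betw (\<lambda>x. x(kz := 0)) ?A ?B"
  proof (rule bij_betw_byWitness[where f' = "\<lambda>z. z(kz := sol (f z))"])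
    show "\<forall>x\<in>?A. (x(kz := 0))(kz := sol (f (x(kz := 0)))) = x"
    proof
      fix x assume x: "x \<in> ?A"
      have "f x = f (x(kz := 0)) + w * x kz" using lin[of x "x kz"] by simp
      hence "x kz = sol (f (x(kz := 0)))" using x kzJ by (intro solu) (auto simp: configs_def)
      thus "(x(kz := 0))(kz := sol (f (x(kz := 0)))) = x" by (auto simp: fun_eq_iff)
    qed
    show "\<forall>z\<in>?B. (z(kz := sol (f z)))(kz := 0) = z"
      by (auto simp: configs_def fun_eq_iff)
    show "(\<lambda>x. x(kz := 0)) ` ?A \<subseteq> ?B"
    proof
      fix y assume "y \<in> (\<lambda>x. x(kz := 0)) ` ?A"
      then obtain x where x: "x \<in> ?A" and y: "y = x(kz := 0)" by blast
      have "y \<in> configs d (N - {kz})" using x d0 unfolding y configs_def by auto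
      moreover have "\<forall>k\<in>J. y k = a k" using x kzJ unfolding y by auto
      ultimately show "y \<in> ?B" by simp
    qed
    show "(\<lambda>z. z(kz := sol (f z))) ` ?B \<subseteq> ?A"
    proof
      fix y assume "y \<in> (\<lambda>z. z(kz := sol (f z))) ` ?B"
      then obtain z where z: "z \<in> ?B" and y: "y = z(kz := sol (f z))" by blast
      have zz: "z(kz := 0) = z" using z by (auto simp: configs_def fun_eq_iff)
      have "f y = f z + w * sol (f z)" unfolding y using lin[of z "sol (f z)"] zz by simp
      hence "f y mod d = v" using sol by simp
      thus "y \<in> ?A" using z y kzJ sol by (auto simp: configs_def)
    qed
  qed
  hence "card ?A = card ?B" by (rule bij_betw_same_card)
  also have "\<dots> = d ^ card (N - {kz} - J)" using J kzJ fN a by (intro F1) auto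
  also have "N - {kz} - J = (N - J) - {kz}" by auto
  also have "card \<dots> = card (N - J) - 1" using kz fN by simp
  finally show ?thesis .
qed

lemma sum_upd: fixes x :: "nat \<Rightarrow> nat" and n :: nat shows "kz < n \<Longrightarrow> (\<Sum>l<n. (x(kz := t)) l) = (\<Sum>l<n. (x(kz := 0)) l) + (t::nat)"
proof -
  assume k: "kz < n"
  have "(\<Sum>l<n. (x(kz := t)) l) = t + (\<Sum>l\<in>{..<n}-{kz}. (x(kz := t)) l)"
    using k by (subst sum.remove[of "{..<n}" kz]) auto
  moreover have "(\<Sum>l<n. (x(kz := 0)) l) = 0 + (\<Sum>l\<in>{..<n}-{kz}. (x(kz := 0)) l)"
    using k by (subst sum.remove[of "{..<n}" kz]) auto
  moreover have "(\<Sum>l\<in>{..<n}-{kz}. (x(kz := t)) l) = (\<Sum>l\<in>{..<n}-{kz}. (x(kz := 0)) l)"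
    by (rule sum.cong) auto
  ultimately show ?thesis by simp
qed

lemma lin_f: fixes x :: "nat \<Rightarrow> nat" shows "kz < n \<Longrightarrow> (\<lambda>x. x j + (\<Sum>l<n. x l)) (x(kz := t)) =
   (\<lambda>x. x j + (\<Sum>l<n. x l)) (x(kz := 0)) + (if kz = j then 2 else 1) * t"
  using sum_upd[of kz n x t] by auto



lemma restr_eq2: "restr T g = restr T g' \<longleftrightarrow> (\<forall>k\<in>T. g k = g' k)"
  by (auto simp: restr_def fun_eq_iff)

lemma restr_eq_a: "a \<in> configs d S \<Longrightarrow> restr S g = a \<longleftrightarrow> (\<forall>k\<in>S. g k = a k)"
  unfolding restr_def by (rule restr_eq_iff)

lemma emb_lt: "k < n \<Longrightarrow> emb d n x k = x k" by (simp add: emb_def)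

lemma emb_out: "k < n \<Longrightarrow> emb d n x (n + k) = (x k + (\<Sum>l<n. x l)) mod d"
  by (simp add: emb_def Mvec_def)

lemma injT_outputs:
  assumes p: "prime d" and dn: "n + 1 < d" and T: "\<forall>k<n. n + k \<in> T"
  shows "inj_on (\<lambda>x. restr T (emb d n x)) (configs d {..<n})"
proof (rule inj_onI)
  fix x y assume x: "x \<in> configs d {..<n}" and y: "y \<in> configs d {..<n}"
    and e: "restr T (emb d n x) = restr T (emb d n y)"
  have "Mvec d n x = Mvec d n y"
  proof
    fix k show "Mvec d n x k = Mvec d n y k"
    proof (cases "k < n")
      case True
      hence "emb d n x (n + k) = emb d n y (n + k)" using e T unfolding restr_eq2 by blast
      thus ?thesis using True by (simp add: emb_out Mvec_def)
    qed (simp add: Mvec_def)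
  qed
  thus "x = y" by (rule Mvec_inj[OF p dn x y])
qed

lemma inj_inputs:
  assumes T: "\<forall>k<n. k \<in> T"
  shows "inj_on (\<lambda>x. restr T (emb d n x)) (configs d {..<n})"
proof (rule inj_onI)
  fix x y assume x: "x \<in> configs d {..<n}" and y: "y \<in> configs d {..<n}"
    and e: "restr T (emb d n x) = restr T (emb d n y)"
  show "x = y"
  proof
    fix k show "x k = y k"
    proof (cases "k < n")
      case True
      hence "emb d n x k = emb d n y k" using e T unfolding restr_eq2 by blast
      thus ?thesis using True by (simp add: emb_lt)
    qed (use x y in \<open>auto simp: configs_def\<close>)
  qed
qed

lemma case_inputs:
  assumes p: "prime d" and dn: "n + 1 < d" and S: "S \<subseteq> {..<n}"
  shows "ent d (2*n) (psiU d n) S = - log 2 (real (d ^ card ({..<n} - S)) / real d ^ n)"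
proof (rule route_beta)
  show d0: "d > 0" using dn by auto
  show "S \<subseteq> {..<2*n}" using S by auto
  show "inj_on (\<lambda>x. restr ({..<2*n}-S) (emb d n x)) (configs d {..<n})"
    by (rule injT_outputs[OF p dn]) (use S in auto)
  fix a assume a: "a \<in> configs d S"
  have "{x\<in>configs d {..<n}. restr S (emb d n x) = a} = {x\<in>configs d {..<n}. \<forall>k\<in>S. x k = a k}"
  proof -
    have ek: "emb d n x k = x k" if "k \<in> S" for x k using S that emb_lt by (metis lessThan_iff subsetD)
    show ?thesis using restr_eq_a[OF a] by (auto simp: ek)
  qed
  also have "card \<dots> = d ^ card ({..<n} - S)"
    by (rule F1) (use S a in \<open>auto simp: configs_def\<close>)
  finally show "card {x\<in>configs d {..<n}. restr S (emb d n x) = a} = d ^ card ({..<n} - S)" .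
next
  have "card ({..<n} - S) + card S = n" using S by (metis card_Diff_subset card_lessThan card_mono finite_lessThan finite_subset le_add_diff_inverse2)
  thus "d ^ card ({..<n} - S) * d ^ card S = d ^ n" by (metis power_add)
qed



lemma coprime_w: assumes p: "prime d" and d2: "2 < d" shows "coprime (if b then 2 else 1) (d::nat)"
proof (cases b)
  case True
  have "\<not> d dvd 2" using d2 by (auto dest: dvd_imp_le)
  hence "coprime d 2" using prime_imp_coprime[OF p] by blast
  thus ?thesis using True by (simp add: coprime_commute)
qed simp

lemma emb_out2: "k < n \<Longrightarrow> emb d n x (n + k) = Mvec d n x k"
  by (simp add: emb_def)

lemma Mvec_f: "k < n \<Longrightarrow> Mvec d n x k = (\<lambda>x. x k + (\<Sum>l<n. x l)) x mod d"
  by (simp add: Mvec_def)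

lemma case_Z:
  assumes p: "prime d" and dn: "n + 1 < d" and j: "j < n"
  shows "ent d (2*n) (psiU d n) {n+j} = - log 2 (real (d ^ (n - 1)) / real d ^ n)"
proof (rule route_beta)
  show d0: "d > 0" using dn by auto
  show "{n+j} \<subseteq> {..<2*n}" using j by auto
  show "inj_on (\<lambda>x. restr ({..<2*n}-{n+j}) (emb d n x)) (configs d {..<n})"
    by (rule inj_inputs) auto
  fix a assume a: "a \<in> configs d {n+j}"
  have "{x\<in>configs d {..<n}. restr {n+j} (emb d n x) = a} =
     {x\<in>configs d {..<n}. (\<forall>k\<in>{}. x k = a k) \<and> (\<lambda>x. x j + (\<Sum>l<n. x l)) x mod d = a (n+j)}"
    using restr_eq_a[OF a] j by (simp add: emb_out)
  also have "card \<dots> = d ^ (card ({..<n} - {}) - 1)"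
  proof (rule F2[where f = "\<lambda>x. x j + (\<Sum>l<n. x l)" and kz = j and w = "if j = j then 2 else 1"])
    show "coprime (if j = j then 2 else 1) d" by (rule coprime_w[OF p]) (use dn j in simp)
    show "a (n + j) < d" using a by (auto simp: configs_def)
    show "(\<lambda>x. x j + (\<Sum>l<n. x l)) (x(j := t)) = (\<lambda>x. x j + (\<Sum>l<n. x l)) (x(j := 0)) + (if j = j then 2 else 1::nat) * t"
      for x :: "nat \<Rightarrow> nat" and t using lin_f[OF j] by blast
  qed (use j d0 in auto)
  finally show "card {x\<in>configs d {..<n}. restr {n+j} (emb d n x) = a} = d ^ (n - 1)" by simp
next
  show "d ^ (n - 1) * d ^ card {n+j} = d ^ n" using j by (simp add: power_Suc2[symmetric])
qed



lemma case_XZ: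
  assumes p: "prime d" and dn: "n + 1 < d" and n2: "2 \<le> n" and i: "i < n" and j: "j < n"
  shows "ent d (2*n) (psiU d n) {i, n+j} = - log 2 (real (d ^ (n - 2)) / real d ^ n)"
proof (rule route_beta)
  show d0: "d > 0" using dn by auto
  have d2: "2 < d" using dn n2 by simp
  show "{i, n+j} \<subseteq> {..<2*n}" using i j by auto
  show "inj_on (\<lambda>x. restr ({..<2*n}-{i, n+j}) (emb d n x)) (configs d {..<n})"
  proof (rule inj_onI)
    fix x y assume x: "x \<in> configs d {..<n}" and y: "y \<in> configs d {..<n}"
      and e: "restr ({..<2*n}-{i, n+j}) (emb d n x) = restr ({..<2*n}-{i, n+j}) (emb d n y)"
    define k1 where "k1 = (if j = 0 then 1 else (0::nat))"
    have k1: "k1 < n" "k1 \<noteq> j" using n2 by (auto simp: k1_def)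
    have ag: "x k = y k" if "k < n" "k \<noteq> i" for k
    proof -
      have mem: "k \<in> {..<2*n} - {i, n+j}" using that by auto
      have "emb d n x k = emb d n y k" using e mem unfolding restr_eq2 by blast
      thus ?thesis using that by (simp add: emb_lt)
    qed
    have mem: "n + k1 \<in> {..<2*n} - {i, n+j}" using k1 i by auto
    have "emb d n x (n + k1) = emb d n y (n + k1)" using e mem unfolding restr_eq2 by blast
    hence mk: "Mvec d n x k1 = Mvec d n y k1" using k1 by (simp add: emb_out2)
    have z: "x(i := 0) = y(i := 0)"
    proof
      fix k show "(x(i := 0)) k = (y(i := 0)) k"
        using ag[of k] x y by (cases "k < n") (auto simp: configs_def)
    qed
    let ?f = "\<lambda>x. x k1 + (\<Sum>l<n. x l)"
    let ?w = "if i = k1 then 2 else 1::nat"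
    have fx: "?f x = ?f (x(i := 0)) + ?w * x i" using lin_f[OF i, where j = k1 and x = x and t = "x i"] by simp
    have fy: "?f y = ?f (y(i := 0)) + ?w * y i" using lin_f[OF i, where j = k1 and x = y and t = "y i"] by simp
    have "(?f (x(i := 0)) + ?w * x i) mod d = (?f (x(i := 0)) + ?w * y i) mod d"
      using mk fx fy z k1 by (simp add: Mvec_def)
    moreover have "x i < d" "y i < d" using x y i by (auto simp: configs_def)
    ultimately have "x i = y i" using cancel_mod[OF coprime_w[OF p d2]] by blast
    show "x = y"
    proof
      fix k show "x k = y k"
        using ag[of k] x y \<open>x i = y i\<close> by (cases "k < n") (auto simp: configs_def)
    qed
  qed
  fix a assume a: "a \<in> configs d {i, n+j}"
  define kz where "kz = (if i = 0 then 1 else (0::nat))"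
  have kz: "kz < n" "kz \<noteq> i" using n2 by (auto simp: kz_def)
  have "{x\<in>configs d {..<n}. restr {i, n+j} (emb d n x) = a} =
     {x\<in>configs d {..<n}. (\<forall>k\<in>{i}. x k = a k) \<and> (\<lambda>x. x j + (\<Sum>l<n. x l)) x mod d = a (n+j)}"
    using restr_eq_a[OF a] i j by (simp add: emb_out emb_lt)
  also have "card \<dots> = d ^ (card ({..<n} - {i}) - 1)"
  proof (rule F2[where f = "\<lambda>x. x j + (\<Sum>l<n. x l)" and kz = kz and w = "if kz = j then 2 else 1"])
    show "coprime (if kz = j then 2 else 1) d" by (rule coprime_w[OF p d2])
    show "a (n + j) < d" using a by (auto simp: configs_def)
    show "(\<lambda>x. x j + (\<Sum>l<n. x l)) (x(kz := t)) = (\<lambda>x. x j + (\<Sum>l<n. x l)) (x(kz := 0)) + (if kz = j then 2 else 1::nat) * t"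
      for x :: "nat \<Rightarrow> nat" and t using lin_f[OF kz(1)] by blast
  qed (use i kz d0 a in \<open>auto simp: configs_def\<close>)
  also have "card ({..<n} - {i}) - 1 = n - 2" using i by simp
  finally show "card {x\<in>configs d {..<n}. restr {i, n+j} (emb d n x) = a} = d ^ (n - 2)" .
next
  have "card {i, n+j} = 2" using i by simp
  moreover have "d ^ (n - 2) * d ^ 2 = d ^ n"
  proof -
    have nn: "n - 2 + 2 = n" using n2 by simp
    have "d ^ (n - 2) * d ^ 2 = d ^ (n - 2 + 2)" by (rule power_add[symmetric])
    thus ?thesis by (simp only: nn)
  qed
  ultimately show "d ^ (n - 2) * d ^ card {i, n+j} = d ^ n" by simp
qed

lemma inj6:
  assumes p: "prime d" and dn: "n + 1 < d" and i: "i < n" and j: "j < n"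
    and x: "x \<in> configs d {..<n}" and y: "y \<in> configs d {..<n}"
    and xi: "x i = y i" and M: "\<forall>k<n. k \<noteq> j \<longrightarrow> Mvec d n x k = Mvec d n y k"
  shows "x = y"
proof -
  define e where "e k = int (x k) - int (y k)" for k
  define s where "s = (\<Sum>l<n. e l)"
  have s_eq: "s = int (\<Sum>l<n. x l) - int (\<Sum>l<n. y l)" by (simp add: s_def e_def sum_subtractf)
  have dk: "int d dvd e k + s" if k: "k < n" "k \<noteq> j" for k
  proof -
    from M k have "(x k + (\<Sum>l<n. x l)) mod d = (y k + (\<Sum>l<n. y l)) mod d"
      unfolding Mvec_def by (metis)
    hence "int (x k + (\<Sum>l<n. x l)) mod int d = int (y k + (\<Sum>l<n. y l)) mod int d"
      by (metis of_nat_mod)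
    hence "int d dvd int (x k + (\<Sum>l<n. x l)) - int (y k + (\<Sum>l<n. y l))"
      by (simp add: mod_eq_dvd_iff)
    thus ?thesis by (simp add: e_def s_eq algebra_simps)
  qed
  have ei: "e i = 0" using xi by (simp add: e_def)
  have sum_split: "s = e m + (\<Sum>k\<in>{..<n}-{m}. e k)" if "m < n" for m
    unfolding s_def using that by (subst sum.remove[of "{..<n}" m]) auto
  have all: "int d dvd e k" if k: "k < n" for k
  proof (cases "i = j")
    case False
    have ds: "int d dvd s" using dk[OF i False] ei by simp
    have oth: "int d dvd e k'" if "k' < n" "k' \<noteq> j" for k'
      using dk[OF that] ds dvd_add_left_iff by blast
    show ?thesis
    proof (cases "k = j")
      case False thus ?thesis using oth k by simp
    next
      case True
      have "int d dvd (\<Sum>k\<in>{..<n}-{j}. e k)" by (rule dvd_sum) (use oth in auto)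
      hence "int d dvd s - (\<Sum>k\<in>{..<n}-{j}. e k)" using ds by (rule dvd_diff[rotated])
      thus ?thesis using sum_split[OF j] True by simp
    qed
  next
    case True
    have "int d dvd (\<Sum>k\<in>{..<n}-{i}. e k + s)" by (rule dvd_sum) (use dk True in auto)
    moreover have "(\<Sum>k\<in>{..<n}-{i}. e k + s) = int n * s"
    proof -
      have "(\<Sum>k\<in>{..<n}-{i}. e k + s) = (\<Sum>k\<in>{..<n}-{i}. e k) + int (n - 1) * s"
        using i by (simp add: sum.distrib)
      also have "(\<Sum>k\<in>{..<n}-{i}. e k) = s" using sum_split[OF i] ei by simp
      finally show ?thesis using i by (simp add: algebra_simps of_nat_diff)
    qed
    ultimately have "int d dvd int n * s" by simp
    moreover have "prime (int d)" using p by simp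
    moreover have "\<not> int d dvd int n"
    proof
      assume "int d dvd int n"
      hence "int d \<le> int n" using i by (intro zdvd_imp_le) auto
      thus False using dn by simp
    qed
    ultimately have ds: "int d dvd s" using prime_dvd_mult_iff by blast
    show ?thesis
    proof (cases "k = i")
      case True thus ?thesis using ei by simp
    next
      case False thus ?thesis using dk[OF k] \<open>i = j\<close> ds dvd_add_left_iff by auto
    qed
  qed
  have "x k = y k" for k
  proof (cases "k < n")
    case True
    have "int d dvd e k" by (rule all[OF True])
    moreover have "x k < d" "y k < d" using x y True by (auto simp: configs_def)
    hence "\<bar>e k\<bar> < int d" by (auto simp: e_def abs_if)
    ultimately have "e k = 0"
      using dvd_imp_le_int[of "e k" "int d"] by (cases "e k = 0") auto
    thus ?thesis by (simp add: e_def)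
  next
    case False thus ?thesis using x y by (auto simp: configs_def)
  qed
  thus ?thesis by auto
qed



lemma case_YZ:
  assumes p: "prime d" and dn: "n + 1 < d" and i: "i < n" and j: "j < n"
  shows "ent d (2*n) (psiU d n) (({..<n} - {i}) \<union> {n+j}) = - log 2 (real (d ^ 0) / real d ^ n)"
proof (rule route_beta)
  let ?S = "({..<n} - {i}) \<union> {n+j}"
  show d0: "d > 0" using dn by auto
  have d2: "2 < d" using dn i by simp
  show "?S \<subseteq> {..<2*n}" using i j by auto
  show "inj_on (\<lambda>x. restr ({..<2*n} - ?S) (emb d n x)) (configs d {..<n})"
  proof (rule inj_onI)
    fix x y assume x: "x \<in> configs d {..<n}" and y: "y \<in> configs d {..<n}"
      and e: "restr ({..<2*n} - ?S) (emb d n x) = restr ({..<2*n} - ?S) (emb d n y)"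
    have memi: "i \<in> {..<2*n} - ?S" using i by auto
    have "emb d n x i = emb d n y i" using e memi unfolding restr_eq2 by blast
    hence xi: "x i = y i" using i by (simp add: emb_lt)
    have M: "\<forall>k<n. k \<noteq> j \<longrightarrow> Mvec d n x k = Mvec d n y k"
    proof (intro allI impI)
      fix k assume k: "k < n" "k \<noteq> j"
      have mem: "n + k \<in> {..<2*n} - ?S" using k by auto
      have "emb d n x (n + k) = emb d n y (n + k)" using e mem unfolding restr_eq2 by blast
      thus "Mvec d n x k = Mvec d n y k" using k by (simp add: emb_out2)
    qed
    show "x = y" by (rule inj6[OF p dn i j x y xi M])
  qed
  fix a assume a: "a \<in> configs d ?S"
  have ek: "emb d n x k = x k" if "k \<in> {..<n} - {i}" for x k using that by (simp add: emb_lt)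
  have "{x\<in>configs d {..<n}. restr ?S (emb d n x) = a} =
     {x\<in>configs d {..<n}. (\<forall>k\<in>{..<n} - {i}. x k = a k) \<and> (\<lambda>x. x j + (\<Sum>l<n. x l)) x mod d = a (n+j)}"
    using restr_eq_a[OF a] j by (auto simp: emb_out ek)
  also have "card \<dots> = d ^ (card ({..<n} - ({..<n} - {i})) - 1)"
  proof (rule F2[where f = "\<lambda>x. x j + (\<Sum>l<n. x l)" and kz = i and w = "if i = j then 2 else 1"])
    show "coprime (if i = j then 2 else 1) d" by (rule coprime_w[OF p d2])
    show "a (n + j) < d" using a by (auto simp: configs_def)
    show "(\<lambda>x. x j + (\<Sum>l<n. x l)) (x(i := t)) = (\<lambda>x. x j + (\<Sum>l<n. x l)) (x(i := 0)) + (if i = j then 2 else 1::nat) * t"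
      for x :: "nat \<Rightarrow> nat" and t using lin_f[OF i] by blast
  qed (use i d0 a in \<open>auto simp: configs_def\<close>)
  also have "{..<n} - ({..<n} - {i}) = {i}" using i by auto
  finally show "card {x\<in>configs d {..<n}. restr ?S (emb d n x) = a} = d ^ 0" by simp
next
  have "card (({..<n} - {i}) \<union> {n+j}) = card ({..<n} - {i}) + card {n+j}"
    by (rule card_Un_disjoint) auto
  hence "card (({..<n} - {i}) \<union> {n+j}) = n" using i by simp
  thus "d ^ 0 * d ^ card (({..<n} - {i}) \<union> {n+j}) = d ^ n" by simp
qed

lemma case_XYZ:
  assumes p: "prime d" and dn: "n + 1 < d" and j: "j < n"
  shows "ent d (2*n) (psiU d n) ({..<n} \<union> {n+j}) = - log 2 (real d / real d ^ n)"
proof (rule route_alpha)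
  let ?S = "{..<n} \<union> {n+j}"
  let ?X = "configs d {..<n}"
  show d0: "d > 0" using dn by auto
  show "?S \<subseteq> {..<2*n}" using j by auto
  show "inj_on (\<lambda>x. restr ?S (emb d n x)) ?X" by (rule inj_inputs) auto
  show "d > 0" by fact
  fix x assume x: "x \<in> ?X"
  have iff: "restr ({..<2*n} - ?S) (emb d n y) = restr ({..<2*n} - ?S) (emb d n x) \<longleftrightarrow>
     (\<forall>k\<in>{..<n} - {j}. Mvec d n y k = Mvec d n x k)" for y
  proof
    assume e: "restr ({..<2*n} - ?S) (emb d n y) = restr ({..<2*n} - ?S) (emb d n x)"
    show "\<forall>k\<in>{..<n} - {j}. Mvec d n y k = Mvec d n x k"
    proof
      fix k assume k: "k \<in> {..<n} - {j}"
      have mem: "n + k \<in> {..<2*n} - ?S" using k by auto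
      have "emb d n y (n + k) = emb d n x (n + k)" using e mem unfolding restr_eq2 by blast
      thus "Mvec d n y k = Mvec d n x k" using k by (simp add: emb_out2)
    qed
  next
    assume M: "\<forall>k\<in>{..<n} - {j}. Mvec d n y k = Mvec d n x k"
    show "restr ({..<2*n} - ?S) (emb d n y) = restr ({..<2*n} - ?S) (emb d n x)"
      unfolding restr_eq2
    proof
      fix k assume k: "k \<in> {..<2*n} - ?S"
      hence k': "k = n + (k - n)" "k - n < n" "k - n \<noteq> j" by auto
      have "Mvec d n y (k - n) = Mvec d n x (k - n)" using M k'(2,3) by blast
      hence "emb d n y (n + (k - n)) = emb d n x (n + (k - n))"
        by (simp only: emb_out2[OF k'(2)])
      thus "emb d n y k = emb d n x k" using k'(1) by metis
    qed
  qed
  have E: "{y\<in>?X. restr ({..<2*n} - ?S) (emb d n y) = restr ({..<2*n} - ?S) (emb d n x)}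
      = {y\<in>?X. \<forall>k\<in>{..<n} - {j}. Mvec d n y k = Mvec d n x k}"
    by (simp only: iff)
  have mb: "bij_betw (Mvec d n) ?X ?X" by (rule Mvec_bij[OF p dn])
  let ?Y = "{y\<in>?X. \<forall>k\<in>{..<n} - {j}. Mvec d n y k = Mvec d n x k}"
  let ?B = "{z\<in>?X. \<forall>k\<in>{..<n} - {j}. z k = Mvec d n x k}"
  have img: "Mvec d n ` ?Y = ?B"
  proof (intro equalityI subsetI)
    fix z assume "z \<in> Mvec d n ` ?Y"
    then obtain y where "y \<in> ?Y" "z = Mvec d n y" by blast
    thus "z \<in> ?B" using Mvec_in[OF d0] by auto
  next
    fix z assume z: "z \<in> ?B"
    hence "z \<in> Mvec d n ` ?X" using bij_betw_imp_surj_on[OF mb] by auto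
    then obtain y where y: "y \<in> ?X" "z = Mvec d n y" by blast
    have "\<forall>k\<in>{..<n} - {j}. Mvec d n y k = Mvec d n x k" using z unfolding y(2) by simp
    hence "y \<in> ?Y" using y(1) by simp
    thus "z \<in> Mvec d n ` ?Y" using y(2) by blast
  qed
  have "inj_on (Mvec d n) ?Y" using bij_betw_imp_inj_on[OF mb] by (rule inj_on_subset) auto
  hence "card (Mvec d n ` ?Y) = card ?Y" by (rule card_image)
  hence "card ?Y = card ?B" using img by simp
  also have "card ?B = d ^ card ({..<n} - ({..<n} - {j}))"
    by (rule F1) (use Mvec_in[OF d0] in \<open>auto simp: configs_def\<close>)
  also have "{..<n} - ({..<n} - {j}) = {j}" using j by auto
  finally show "card {y\<in>?X. restr ({..<2*n} - ?S) (emb d n y) = restr ({..<2*n} - ?S) (emb d n x)} = d"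
    unfolding E by simp
qed



lemma logE:
  assumes d1: "1 < d" and a: "a \<le> n"
  shows "- log 2 (real (d ^ a) / real d ^ n) = real (n - a) * log 2 (real d)"
proof -
  have dp: "real d > 0" using d1 by simp
  have "log 2 (real (d ^ a) / real d ^ n) = log 2 (real d ^ a) - log 2 (real d ^ n)"
    using dp by (simp add: log_divide)
  also have "\<dots> = real a * log 2 (real d) - real n * log 2 (real d)"
    using dp by (simp add: log_nat_power)
  finally show ?thesis using a by (simp add: of_nat_diff algebra_simps)
qed

theorem proposition13:
  fixes n d :: nat
  assumes "n \<ge> 1" and "prime d" and "d > n + 1"
  shows "unitary_mat (U_dn d n) \<and>
    (\<forall>i<n. \<forall>j<n.
       tripartite_info d (2 * n) (choi_vec d n (U_dn d n))
         {i} ({..<n} - {i}) {n + j}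
       = - 2 * log 2 (real (Min {d, d ^ (n - 1), d, d ^ (n - 1)})))"
proof (intro conjI allI impI)
  note n1 = assms(1) and p = assms(2) and dn = assms(3)
  show "unitary_mat (U_dn d n)" by (rule unitary_U[OF p dn])
  fix i j assume i: "i < n" and j: "j < n"
  have d1: "1 < d" using dn by simp
  let ?L = "log 2 (real d)"
  let ?e = "ent d (2*n) (psiU d n)"
  have eX: "?e {i} = ?L"
  proof -
    have "?e {i} = - log 2 (real (d ^ card ({..<n} - {i})) / real d ^ n)"
      by (rule case_inputs[OF p dn]) (use i in auto)
    also have "card ({..<n} - {i}) = n - 1" using i by simp
    finally show ?thesis using logE[OF d1, of "n - 1" n] n1 by simp
  qed
  have eY: "?e ({..<n} - {i}) = real (n - 1) * ?L"
  proof -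
    have "?e ({..<n} - {i}) = - log 2 (real (d ^ card ({..<n} - ({..<n} - {i}))) / real d ^ n)"
      by (rule case_inputs[OF p dn]) auto
    also have "{..<n} - ({..<n} - {i}) = {i}" using i by auto
    finally show ?thesis using logE[OF d1, of 1 n] n1 by simp
  qed
  have eXY: "?e {..<n} = real n * ?L"
  proof -
    have "?e {..<n} = - log 2 (real (d ^ card ({..<n} - {..<n})) / real d ^ n)"
      by (rule case_inputs[OF p dn]) auto
    thus ?thesis using logE[OF d1, of 0 n] by simp
  qed
  have eZ: "?e {n+j} = ?L"
    using case_Z[OF p dn j] logE[OF d1, of "n - 1" n] n1 by simp
  have eYZ: "?e (({..<n} - {i}) \<union> {n+j}) = real n * ?L"
    using case_YZ[OF p dn i j] logE[OF d1, of 0 n] by simp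
  have eXYZ: "?e ({..<n} \<union> {n+j}) = real (n - 1) * ?L"
  proof -
    have "?e ({..<n} \<union> {n+j}) = - log 2 (real (d ^ 1) / real d ^ n)"
      using case_XYZ[OF p dn j] by simp
    thus ?thesis using logE[OF d1, of 1 n] n1 by simp
  qed
  have s1: "{i} \<union> ({..<n} - {i}) = {..<n}" using i by auto
  have s3: "{i} \<union> (({..<n} - {i}) \<union> {n+j}) = {..<n} \<union> {n+j}" using i by auto
  have MinE: "{d, d ^ (n - 1), d, d ^ (n - 1)} = {d, d ^ (n - 1)}" by auto
  have I3: "tripartite_info d (2 * n) (psiU d n) {i} ({..<n} - {i}) {n + j} = - ?e ({i} \<union> {n+j})"
  proof -
    have "tripartite_info d (2 * n) (psiU d n) {i} ({..<n} - {i}) {n + j} =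
      (?e {i} + ?e ({..<n} - {i}) - ?e {..<n}) + (?e {i} + ?e {n+j} - ?e ({i} \<union> {n+j}))
      - (?e {i} + ?e (({..<n} - {i}) \<union> {n+j}) - ?e ({..<n} \<union> {n+j}))"
      unfolding tripartite_info_def mutual_info_def s1 s3 by simp
    also have "\<dots> = - ?e ({i} \<union> {n+j})"
      unfolding eX eY eXY eZ eYZ eXYZ using n1 by (simp add: of_nat_diff algebra_simps)
    finally show ?thesis .
  qed
  show "tripartite_info d (2 * n) (choi_vec d n (U_dn d n)) {i} ({..<n} - {i}) {n + j}
       = - 2 * log 2 (real (Min {d, d ^ (n - 1), d, d ^ (n - 1)}))"
  proof (cases "n = 1")
    case True
    hence ij: "i = 0" "j = 0" using i j by auto
    have "{i} \<union> {n+j} = {..<n} \<union> {n+j}" using True ij by auto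
    hence "?e ({i} \<union> {n+j}) = 0" using eXYZ True by simp
    moreover have "Min {d, d ^ (n - 1), d, d ^ (n - 1)} = 1" unfolding MinE using True d1 by simp
    ultimately show ?thesis using I3 by simp
  next
    case False
    hence n2: "2 \<le> n" using n1 by simp
    have "{i} \<union> {n+j} = {i, n+j}" by auto
    hence "?e ({i} \<union> {n+j}) = 2 * ?L"
      using case_XZ[OF p dn n2 i j] logE[OF d1, of "n - 2" n] n2 by simp
    moreover have "Min {d, d ^ (n - 1), d, d ^ (n - 1)} = d"
    proof -
      have "d \<le> d ^ (n - 1)" using d1 n2 by (intro self_le_power) auto
      thus ?thesis unfolding MinE by simp
    qed
    ultimately show ?thesis using I3 by simp
  qed
qed


end
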